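(* Let $R_2=\sup_{p\ge0}p\,\big(1-F(2p)\big)$, the maximal revenue from offering one positional good at price $p$ in addition to a free low-level position. Then $$R_2\ \ge\ \tfrac12\sup_{s\in\mathcal S(0)}\int_0^{\bar\theta}J(\theta)s(\theta)\,dF(\theta).$$
   Context: Let $0<\bar\theta<\infty$, $\Theta=[0,\bar\theta]$, $F$ a cdf on $\Theta$ with continuous, strictly positive density $f$, $dF=f\,d\theta$, extended by $F(x)=1$ for $x\ge\bar\theta$; $J(\theta)=\theta-\frac{1-F(\theta)}{f(\theta)}$. For bounded measurable $a,b$ on $\Theta$, write $b\in\mathrm{MPS}(a)$ if $\int_x^{\bar\theta}b\,dF\le\int_x^{\bar\theta}a\,dF$ for all $x\in\Theta$, with equality at $x=0$. $\mathcal S(0)$ is the set of nondecreasing $s:\Theta\to[0,1]$ with $s\in\mathrm{MPS}(F)$. The supremum on the right is the maximal revenue when exclusion is impossible. *)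

theory Defs
  imports "HOL-Analysis.Analysis"
begin

definition virt_val :: "(real \<Rightarrow> real) \<Rightarrow> (real \<Rightarrow> real) \<Rightarrow> real \<Rightarrow> real" where
  "virt_val F f \<theta> = \<theta> - (1 - F \<theta>) / f \<theta>"

definition MPS :: "real \<Rightarrow> (real \<Rightarrow> real) \<Rightarrow> (real \<Rightarrow> real) \<Rightarrow> (real \<Rightarrow> real) \<Rightarrow> bool" where
  "MPS \<theta>bar f a b \<longleftrightarrow>
     (\<forall>x\<in>{0..\<theta>bar}. integral {x..\<theta>bar} (\<lambda>t. b t * f t) \<le> integral {x..\<theta>bar} (\<lambda>t. a t * f t))
     \<and> integral {0..\<theta>bar} (\<lambda>t. b t * f t) = integral {0..\<theta>bar} (\<lambda>t. a t * f t)"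

definition S0 :: "real \<Rightarrow> (real \<Rightarrow> real) \<Rightarrow> (real \<Rightarrow> real) \<Rightarrow> (real \<Rightarrow> real) set" where
  "S0 \<theta>bar F f = {s. mono_on {0..\<theta>bar} s \<and> (\<forall>\<theta>\<in>{0..\<theta>bar}. 0 \<le> s \<theta> \<and> s \<theta> \<le> 1)
                      \<and> MPS \<theta>bar f F s}"

end

theory Submission
  imports Defs
begin

theorem mainTheorem13:
  fixes \<theta>bar :: real and F f :: "real \<Rightarrow> real"
  assumes "0 < \<theta>bar"
    and "continuous_on {0..\<theta>bar} f"
    and "\<forall>\<theta>\<in>{0..\<theta>bar}. 0 < f \<theta>"
    and "\<forall>x\<in>{0..\<theta>bar}. F x = integral {0..x} f"
    and "\<forall>x\<ge>\<theta>bar. F x = 1"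
  shows "(SUP p\<in>{0..}. p * (1 - F (2 * p)))
           \<ge> 1/2 * (SUP s\<in>S0 \<theta>bar F f. integral {0..\<theta>bar} (\<lambda>\<theta>. virt_val F f \<theta> * s \<theta> * f \<theta>))"
proof -
  note tb = assms(1) and fc = assms(2) and fpos = assms(3) and Fdef = assms(4) and F1 = assms(5)
  let ?I = "{0..\<theta>bar}"
  have fint: "f integrable_on {0..x}" if "x \<in> ?I" for x
    using integrable_continuous_real that continuous_on_subset[OF fc, of "{0..x}"] by auto
  have Fmono: "F x \<le> F y" if "x \<in> ?I" "y \<in> ?I" "x \<le> y" for x y
  proof -
    have "integral {0..x} f \<le> integral {0..y} f"
      apply (rule integral_subset_le)
      using that fint fpos by (auto intro: less_imp_le)
    then show ?thesis using Fdef that by simp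
  qed
  have F0: "F x \<ge> 0" if "x \<in> ?I" for x
  proof -
    have "integral {0..x} f \<ge> 0"
      apply (rule integral_nonneg)
      using that fint fpos by (auto intro: less_imp_le)
    then show ?thesis using Fdef that by simp
  qed
  have Fle1: "F x \<le> 1" if "x \<in> ?I" for x
    using Fmono[OF that, of \<theta>bar] F1 tb that by auto
  have Fder: "(F has_vector_derivative f x) (at x within ?I)" if "x \<in> ?I" for x
    apply (rule has_vector_derivative_transform_within[OF integral_has_vector_derivative[OF fc that], of 1])
    using that Fdef by auto
  define G where "G \<theta> = \<theta> * (1 - F \<theta>)" for \<theta>
  define h where "h \<theta> = \<theta> * f \<theta> - (1 - F \<theta>)" for \<theta>
  have Gder: "(G has_vector_derivative (- h x)) (at x within ?I)" if "x \<in> ?I" for x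
  proof -
    have Fd: "(F has_real_derivative f x) (at x within ?I)"
      using Fder[OF that] has_real_derivative_iff_has_vector_derivative by blast
    have "((\<lambda>\<theta>. \<theta> * (1 - F \<theta>)) has_real_derivative (- h x)) (at x within ?I)"
    proof -
      have d1: "((\<lambda>\<theta>. 1 - F \<theta>) has_real_derivative (0 - f x)) (at x within ?I)"
        by (rule DERIV_diff[OF DERIV_const Fd])
      have "((\<lambda>\<theta>. \<theta> * (1 - F \<theta>)) has_real_derivative (1 * (1 - F x) + (0 - f x) * x)) (at x within ?I)"
        by (rule DERIV_mult[OF DERIV_ident d1])
      moreover have "1 * (1 - F x) + (0 - f x) * x = - h x" unfolding h_def by (simp add: algebra_simps)
      ultimately show ?thesis by metis
    qed
    then show ?thesis unfolding G_def using has_real_derivative_iff_has_vector_derivative by blast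
  qed
  have hint: "integral {a..b} h = G a - G b" if "0 \<le> a" "a \<le> b" "b \<le> \<theta>bar" for a b
  proof -
    have "((\<lambda>x. - h x) has_integral (G b - G a)) {a..b}"
      apply (rule fundamental_theorem_of_calculus[OF that(2)])
      apply (rule has_vector_derivative_within_subset[OF Gder])
      using that by auto
    from has_integral_neg[OF this] have "(h has_integral (G a - G b)) {a..b}"
      by simp
    then show ?thesis by (rule integral_unique)
  qed
  have hcont: "continuous_on ?I h"
  proof -
    have "continuous_on ?I F"
      using Fder by (meson has_vector_derivative_continuous continuous_on_eq_continuous_within)
    then show ?thesis unfolding h_def by (intro continuous_intros fc)
  qed
  have hI: "h integrable_on ?I" using hcont integrable_continuous_real by blast
  have G0: "G c \<ge> 0" if "c \<in> ?I" for c
    using that Fle1[OF that] unfolding G_def by auto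
  define L where "L = (SUP p\<in>{0..}. p * (1 - F (2 * p)))"
  have bddL: "bdd_above ((\<lambda>p. p * (1 - F (2 * p))) ` {0..})"
  proof (rule bdd_aboveI2[of _ _ \<theta>bar])
    fix p :: real assume "p \<in> {0..}"
    then have p: "p \<ge> 0" by simp
    show "p * (1 - F (2 * p)) \<le> \<theta>bar"
    proof (cases "2 * p \<ge> \<theta>bar")
      case True then show ?thesis using F1 tb by auto
    next
      case False
      then have "2*p \<in> ?I" using p by auto
      then have "0 \<le> 1 - F (2*p)" "1 - F (2*p) \<le> 1" using F0 Fle1 by auto
      then have "p * (1 - F (2 * p)) \<le> p * 1" using p by (intro mult_left_mono) auto
      then show ?thesis using False p by linarith
    qed
  qed
  have GL: "G c \<le> 2 * L" if "c \<in> ?I" for c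
  proof -
    have "(c/2) * (1 - F (2 * (c/2))) \<le> L"
      unfolding L_def apply (rule cSUP_upper[OF _ bddL]) using that by auto
    then show ?thesis unfolding G_def by auto
  qed
  have key: "integral ?I (\<lambda>\<theta>. virt_val F f \<theta> * s \<theta> * f \<theta>) \<le> 2 * L" if s: "s \<in> S0 \<theta>bar F f" for s
  proof -
    have smono: "\<And>x y. 0 \<le> x \<Longrightarrow> x \<le> y \<Longrightarrow> y \<le> \<theta>bar \<Longrightarrow> s x \<le> s y"
      using s unfolding S0_def mono_on_def by auto
    have s01: "0 \<le> s x" "s x \<le> 1" if "x \<in> ?I" for x
      using s that unfolding S0_def by auto
    have eq: "integral ?I (\<lambda>\<theta>. virt_val F f \<theta> * s \<theta> * f \<theta>) = integral ?I (\<lambda>\<theta>. s \<theta> * h \<theta>)"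
    proof (rule integral_cong)
      fix x assume "x \<in> ?I"
      then have "f x \<noteq> 0" using fpos by force
      then show "virt_val F f x * s x * f x = s x * h x"
        unfolding virt_val_def h_def by (simp add: field_simps)
    qed
    obtain c where c: "c \<in> ?I"
      and ceq: "integral ?I (\<lambda>x. s x * h x) = s 0 * integral {0..c} h + s \<theta>bar * integral {c..\<theta>bar} h"
      using second_mean_value_theorem[OF hI, of s] tb smono by auto
    have "integral ?I (\<lambda>x. s x * h x) = s 0 * (G 0 - G c) + s \<theta>bar * (G c - G \<theta>bar)"
      using ceq hint c by auto
    also have "\<dots> = (s \<theta>bar - s 0) * G c" unfolding G_def using F1 by (simp add: algebra_simps)
    also have "\<dots> \<le> 1 * G c"
      apply (rule mult_right_mono) using s01[of 0] s01[of \<theta>bar] tb G0[OF c] by auto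
    also have "\<dots> \<le> 2 * L" using GL[OF c] by simp
    finally show ?thesis using eq by simp
  qed
  have Fin: "F \<in> S0 \<theta>bar F f"
    unfolding S0_def MPS_def mono_on_def using Fmono F0 Fle1 by auto
  have "(SUP s\<in>S0 \<theta>bar F f. integral ?I (\<lambda>\<theta>. virt_val F f \<theta> * s \<theta> * f \<theta>)) \<le> 2 * L"
    apply (rule cSUP_least) using Fin key by auto
  then show ?thesis unfolding L_def by simp
qed

end
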